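(* Let $f(z)=\sum_{k\ge0}f_kz^k$ be holomorphic on the open unit disk, $0<r<1$, and let $N(n)$ be an increasing sequence of integers with $N(n)/n\to\infty$ such that for each $n$ there are $P_n\in\mathcal P_n$ and $Q_n\in\mathcal P_1$, $Q_n\neq0$, with $Q_nf-P_n$ having at least $N(n)$ zeros in $\overline\Delta_r$, normalized so that $Q_n(z)=\alpha_nz-1$ with $\alpha_n\in\mathbb C$ or $Q_n(z)=z$ (written $\alpha_n=\infty$). Let $\rho=1/\limsup_k|f_k|^{1/k}\ge1$ be the radius of convergence of the Taylor series of $f$ at $0$. Then $\limsup_{n\to\infty}|\alpha_n|\ge1/\rho$.
   Context: $\mathcal P_n$ is the space of complex polynomials of degree at most $n$; zeros are counted with multiplicity; $|\infty|=\infty$ and $1/\infty=0$. *)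

theory Defs
  imports "HOL-Complex_Analysis.Complex_Analysis" "HOL-Computational_Algebra.Polynomial"
begin

text \<open>g has at least m zeros in S, counted with multiplicity: there are finitely
  many distinct points z in S and multiplicities mult z such that g and its
  derivatives of order < mult z vanish at z, with total multiplicity at least m.\<close>
definition zeros_at_least :: "(complex \<Rightarrow> complex) \<Rightarrow> complex set \<Rightarrow> int \<Rightarrow> bool" where
  "zeros_at_least g S m \<longleftrightarrow>
     (\<exists>A mult. finite A \<and> A \<subseteq> S \<and>
        (\<forall>z\<in>A. \<forall>j<mult z. (deriv ^^ j) g z = 0) \<and> int (sum mult A) \<ge> m)"

text \<open>Normalized degree-one denominator: Some a gives a z - 1, None (alpha = infinity) gives z.\<close>
definition Qpoly :: "complex option \<Rightarrow> complex poly" where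
  "Qpoly a = (case a of Some c \<Rightarrow> [:-1, c:] | None \<Rightarrow> [:0, 1:])"

definition absalpha :: "complex option \<Rightarrow> ereal" where
  "absalpha a = (case a of Some c \<Rightarrow> ereal (norm c) | None \<Rightarrow> \<infinity>)"

definition taylor_coeff :: "(complex \<Rightarrow> complex) \<Rightarrow> nat \<Rightarrow> complex" where
  "taylor_coeff f k = (deriv ^^ k) f 0 / of_nat (fact k)"

end

theory Submission
  imports Defs
begin
lemma higher_deriv_poly: "(deriv ^^ k) (poly p) = poly ((pderiv ^^ k) p)"
proof (induction k arbitrary: p)
  case 0 then show ?case by simp
next
  case (Suc k)
  have "deriv (poly p) = poly (pderiv p)"
    by (rule ext, rule DERIV_imp_deriv, rule poly_DERIV)
  have "(deriv ^^ Suc k) (poly p) = (deriv ^^ k) (deriv (poly p))"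
    by (simp only: funpow_Suc_right comp_def)
  also have "\<dots> = poly ((pderiv ^^ k) (pderiv p))" using \<open>deriv (poly p) = poly (pderiv p)\<close> Suc by simp
  also have "\<dots> = poly ((pderiv ^^ Suc k) p)" by (simp only: funpow_Suc_right comp_def)
  finally show ?case .
qed

lemma coeff_pderiv_funpow: "coeff ((pderiv ^^ k) p) 0 = fact k * coeff p k"
proof (induction k arbitrary: p)
  case 0 then show ?case by simp
next
  case (Suc k)
  have "coeff ((pderiv ^^ Suc k) p) 0 = coeff ((pderiv ^^ k) (pderiv p)) 0"
    by (simp only: funpow_Suc_right comp_def)
  also have "\<dots> = fact k * coeff (pderiv p) k" by (rule Suc)
  also have "\<dots> = fact (Suc k) * coeff p (Suc k)" by (simp add: coeff_pderiv algebra_simps)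
  finally show ?case .
qed

lemma higher_deriv_poly_0: "(deriv ^^ k) (poly p) 0 = fact k * coeff p k"
  by (simp add: higher_deriv_poly poly_0_coeff_0 coeff_pderiv_funpow)

lemma higher_deriv_lin: "(deriv ^^ i) (\<lambda>w::complex. w - a) = (\<lambda>w. if i = 0 then w - a else if i = 1 then 1 else 0)"
proof (cases i)
  case 0 then show ?thesis by simp
next
  case (Suc j)
  have "deriv (\<lambda>w::complex. w - a) = (\<lambda>w. 1)"
    by (rule ext, rule DERIV_imp_deriv, auto intro!: derivative_eq_intros)
  then show ?thesis using Suc by (simp add: funpow_Suc_right del: funpow.simps)
qed

lemma higher_deriv_mult_lin:
  fixes h :: "complex \<Rightarrow> complex"
  assumes "h holomorphic_on S" "open S" "b \<in> S"
  shows "(deriv ^^ j) (\<lambda>w. (w - a) * h w) b = (b - a) * (deriv ^^ j) h b + of_nat j * (if j = 0 then 0 else (deriv ^^ (j - 1)) h b)"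
proof -
  have hl: "(\<lambda>w::complex. w - a) holomorphic_on S" by (intro holomorphic_intros)
  have "(deriv ^^ j) (\<lambda>w. (w - a) * h w) b = (\<Sum>i = 0..j. of_nat (j choose i) * (deriv ^^ i) (\<lambda>w. w - a) b * (deriv ^^ (j-i)) h b)"
    by (rule higher_deriv_mult[OF hl assms])
  also have "\<dots> = (\<Sum>i \<in> {0..min j 1}. of_nat (j choose i) * (deriv ^^ i) (\<lambda>w. w - a) b * (deriv ^^ (j-i)) h b)"
  proof (rule sum.mono_neutral_right)
    show "\<forall>i\<in>{0..j} - {0..min j 1}. of_nat (j choose i) * (deriv ^^ i) (\<lambda>w. w - a) b * (deriv ^^ (j-i)) h b = 0"
    proof
      fix i assume "i \<in> {0..j} - {0..min j 1}"
      then have "i \<noteq> 0" "i \<noteq> 1" by auto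
      then show "of_nat (j choose i) * (deriv ^^ i) (\<lambda>w. w - a) b * (deriv ^^ (j-i)) h b = 0"
        by (simp only: higher_deriv_lin) simp
    qed
  qed auto
  also have "\<dots> = (b - a) * (deriv ^^ j) h b + of_nat j * (if j = 0 then 0 else (deriv ^^ (j - 1)) h b)"
  proof (cases "j = 0")
    case True then show ?thesis by (simp add: higher_deriv_lin)
  next
    case False
    then have "{0..min j 1} = {0, 1}" by auto
    then show ?thesis using False by (simp add: higher_deriv_lin)
  qed
  finally show ?thesis .
qed

lemma higher_deriv_mult_zero:
  fixes h u :: "complex \<Rightarrow> complex"
  assumes "h holomorphic_on S" "u holomorphic_on S" "open S" "b \<in> S"
    and "\<forall>j<m. (deriv ^^ j) h b = 0" and "j < m"
  shows "(deriv ^^ j) (\<lambda>w. h w * u w) b = 0"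
  using assms by (subst higher_deriv_mult[OF assms(1-4)]) (auto intro!: sum.neutral)

lemma blaschke_identity:
  fixes a z :: complex and R :: real
  shows "(cmod (of_real (R^2) - cnj a * z))^2 = R^2 * (cmod (z - a))^2 + (R^2 - (cmod a)^2) * (R^2 - (cmod z)^2)"
  unfolding cmod_power2 by (simp add: power2_eq_square algebra_simps)

definition bd :: "real \<Rightarrow> real \<Rightarrow> real" where
  "bd r R = sqrt (1 - ((R^2 - r^2) / (R^2 + r^2))^2)"

lemma bd_props:
  assumes "0 < r" "r < R"
  shows "0 \<le> bd r R" "bd r R < 1"
proof -
  have r2: "0 < r^2" using assms by simp
  have p: "0 < R^2 + r^2" using r2 zero_le_power2[of R] by linarith
  have rR: "r^2 < R^2" using assms by (simp add: power_strict_mono)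
  have e0: "0 < (R^2 - r^2) / (R^2 + r^2)" using p rR
    by (intro divide_pos_pos) auto
  have e1: "(R^2 - r^2) / (R^2 + r^2) < 1" using p r2 by (simp add: divide_less_eq)
  have "((R^2 - r^2) / (R^2 + r^2))^2 < 1" using e0 e1
    by (simp add: power_less_one_iff)
  moreover have "0 < ((R^2 - r^2) / (R^2 + r^2))^2" using e0 by (rule zero_less_power)
  ultimately show "0 \<le> bd r R" "bd r R < 1" unfolding bd_def by auto
qed

lemma D_nonzero:
  fixes a z :: complex
  assumes "0 < r" "r < R" "cmod a \<le> r" "cmod z \<le> R"
  shows "of_real (R^2) - cnj a * z \<noteq> 0"
proof
  assume "of_real (R^2) - cnj a * z = 0"
  then have "cnj a * z = of_real (R^2)" by simp
  then have "cmod (cnj a * z) = R^2" by (simp only: norm_of_real) simp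
  moreover have "cmod (cnj a * z) \<le> r * R" using assms by (simp add: norm_mult mult_mono)
  moreover have "r * R < R^2" using assms by (simp add: power2_eq_square)
  ultimately show False by simp
qed

lemma blaschke_le:
  fixes a z :: complex
  assumes "0 < r" "r < R" "cmod a \<le> r" "cmod z \<le> r"
  shows "R * cmod (z - a) \<le> bd r R * cmod (of_real (R^2) - cnj a * z)"
proof -
  define D where "D = cmod (of_real (R^2) - cnj a * z)"
  define e where "e = (R^2 - r^2) / (R^2 + r^2)"
  have Rr: "0 < R^2 + r^2" using assms zero_le_power2[of R] by (smt (verit) zero_less_power)
  have id: "D^2 = R^2 * (cmod (z - a))^2 + (R^2 - (cmod a)^2) * (R^2 - (cmod z)^2)"
    unfolding D_def by (rule blaschke_identity)
  have a2: "(cmod a)^2 \<le> r^2" "(cmod z)^2 \<le> r^2" using assms by (auto intro: power_mono)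
  have X: "(R^2 - r^2)^2 \<le> (R^2 - (cmod a)^2) * (R^2 - (cmod z)^2)"
  proof -
    have "r^2 < R^2" using assms by (simp add: power_strict_mono)
    then show ?thesis unfolding power2_eq_square[of "R^2 - r^2"] using a2
      by (intro mult_mono) auto
  qed
  have Dle: "D \<le> R^2 + r^2"
  proof -
    have "D \<le> cmod (of_real (R^2) :: complex) + cmod (cnj a * z)" unfolding D_def by (rule norm_triangle_ineq4)
    also have "cmod (cnj a * z) \<le> r * r" using assms by (simp add: norm_mult mult_mono)
    finally show ?thesis using assms by (simp add: power2_eq_square norm_mult)
  qed
  have D0: "0 \<le> D" unfolding D_def by simp
  have "e^2 * D^2 \<le> e^2 * (R^2 + r^2)^2"
    using Dle D0 by (intro mult_left_mono power_mono) auto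
  also have "\<dots> = (R^2 - r^2)^2" unfolding e_def using Rr by (simp add: power_divide)
  finally have eD: "e^2 * D^2 \<le> (R^2 - (cmod a)^2) * (R^2 - (cmod z)^2)" using X by linarith
  have "(R * cmod (z - a))^2 \<le> (1 - e^2) * D^2"
    using id eD by (simp add: power_mult_distrib algebra_simps)
  also have "\<dots> = (bd r R * D)^2"
  proof -
    have rR: "r^2 < R^2" using assms by (simp add: power_strict_mono)
    have e0: "0 < e" unfolding e_def using Rr rR by (intro divide_pos_pos) auto
    have e1: "e < 1" unfolding e_def using Rr assms by (simp add: divide_less_eq)
    have "e^2 < 1" using e0 e1 by (simp add: power_less_one_iff)
    then have "0 \<le> 1 - e^2" by simp
    then show ?thesis unfolding bd_def e_def[symmetric] by (simp add: power_mult_distrib)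
  qed
  finally have sq: "(R * cmod (z - a))^2 \<le> (bd r R * D)^2" .
  have "0 \<le> bd r R * D" using bd_props(1)[OF assms(1,2)] D0 by (rule mult_nonneg_nonneg)
  from power2_le_imp_le[OF sq this] show ?thesis unfolding D_def .
qed

lemma blaschke_sphere:
  fixes a z :: complex
  assumes "cmod z = R" "0 \<le> R"
  shows "cmod (of_real (R^2) - cnj a * z) = R * cmod (z - a)"
proof -
  have "(cmod (of_real (R^2) - cnj a * z))^2 = R^2 * (cmod (z - a))^2"
    using blaschke_identity[of R a z, unfolded assms(1)] by simp
  also have "\<dots> = (R * cmod (z - a))^2" by (simp only: power_mult_distrib)
  finally have sq: "(cmod (of_real (R^2) - cnj a * z))^2 = (R * cmod (z - a))^2" .
  have "0 \<le> R * cmod (z - a)" using assms(2) by simp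
  from power2_eq_imp_eq[OF sq norm_ge_zero this] show ?thesis .
qed

lemma zero_transfer:
  fixes g h :: "complex \<Rightarrow> complex"
  assumes hol: "h holomorphic_on S" and S: "open S" "b \<in> S"
    and eq: "\<And>w. w \<in> S \<Longrightarrow> g w = (w - a) * h w"
    and zs: "\<forall>j<m. (deriv ^^ j) g b = 0"
  shows "b \<noteq> a \<Longrightarrow> \<forall>j<m. (deriv ^^ j) h b = 0"
    and "b = a \<Longrightarrow> \<forall>j<m-1. (deriv ^^ j) h b = 0"
proof -
  have gd: "(deriv ^^ j) g b = (b - a) * (deriv ^^ j) h b + of_nat j * (if j = 0 then 0 else (deriv ^^ (j - 1)) h b)" for j
  proof -
    have "(deriv ^^ j) g b = (deriv ^^ j) (\<lambda>w. (w - a) * h w) b"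
    proof (rule higher_deriv_cong_ev)
      show "\<forall>\<^sub>F x in nhds b. g x = (x - a) * h x"
        using eventually_nhds_in_open[OF S] by (rule eventually_mono) (use eq in auto)
    qed simp
    also have "\<dots> = (b - a) * (deriv ^^ j) h b + of_nat j * (if j = 0 then 0 else (deriv ^^ (j - 1)) h b)"
      by (rule higher_deriv_mult_lin[OF hol S])
    finally show ?thesis .
  qed
  show "\<forall>j<m-1. (deriv ^^ j) h b = 0" if ba: "b = a"
  proof (intro allI impI)
    fix j assume "j < m - 1"
    then have "Suc j < m" by linarith
    then have z: "(deriv ^^ Suc j) g b = 0" using zs by blast
    have "(deriv ^^ Suc j) g b = of_nat (Suc j) * (deriv ^^ j) h b"
      using gd[of "Suc j"] ba by (simp del: funpow.simps)
    then have "of_nat (Suc j) * (deriv ^^ j) h b = 0" using z by simp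
    then show "(deriv ^^ j) h b = 0" by (simp del: funpow.simps of_nat_Suc)
  qed
  show "\<forall>j<m. (deriv ^^ j) h b = 0" if ba: "b \<noteq> a"
  proof (intro allI)
    fix j show "j < m \<longrightarrow> (deriv ^^ j) h b = 0"
    proof (induction j)
      case 0
      show ?case
      proof
        assume "0 < m"
        then have "(deriv ^^ 0) g b = 0" using zs by blast
        then have "(b - a) * (deriv ^^ 0) h b = 0" using gd[of 0] by (simp del: funpow.simps)
        then show "(deriv ^^ 0) h b = 0" using ba by (simp del: funpow.simps)
      qed
    next
      case (Suc j)
      show ?case
      proof
        assume "Suc j < m"
        then have h1: "(deriv ^^ j) h b = 0" using Suc by simp
        have g1: "(deriv ^^ Suc j) g b = 0" using zs \<open>Suc j < m\<close> by blast
        have "(b - a) * (deriv ^^ Suc j) h b = 0" using gd[of "Suc j"] h1 g1 by (simp del: funpow.simps)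
        then show "(deriv ^^ Suc j) h b = 0" using ba by (simp del: funpow.simps)
      qed
    qed
  qed
qed

lemma small_induct:
  fixes r R M :: real
  assumes r: "0 < r" "r < R" "R < 1"
  shows "\<And>g A mult z. g holomorphic_on ball 0 1 \<Longrightarrow> finite A \<Longrightarrow> A \<subseteq> cball 0 r \<Longrightarrow>
    (\<forall>z\<in>A. \<forall>j<mult z. (deriv ^^ j) g z = 0) \<Longrightarrow> m \<le> sum mult A \<Longrightarrow>
    (\<forall>z. cmod z = R \<longrightarrow> cmod (g z) \<le> M) \<Longrightarrow> cmod z \<le> r \<Longrightarrow> cmod (g z) \<le> bd r R ^ m * M"
proof (induction m)
  case (0 g A mult z)
  have sub: "cball 0 R \<subseteq> ball (0::complex) 1" using r by auto
  have "cmod (g z) \<le> M"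
  proof (rule maximum_modulus_frontier[of g "ball 0 R"])
    show "g holomorphic_on interior (ball 0 R)"
      using 0(1) sub by (simp add: holomorphic_on_subset[OF _ ball_subset_cball[THEN order_trans]])
    show "continuous_on (closure (ball 0 R)) g"
      using r sub 0(1) by (auto intro: holomorphic_on_imp_continuous_on holomorphic_on_subset)
    show "bounded (ball (0::complex) R)" by simp
    show "cmod (g w) \<le> M" if "w \<in> frontier (ball 0 R)" for w
      using that r 0(6) by auto
    show "z \<in> ball 0 R" using 0(7) r by auto
  qed
  then show ?case by simp
next
  case (Suc m g A mult z)
  note hol = Suc.prems(1) and finA = Suc.prems(2) and Asub = Suc.prems(3)
    and zs = Suc.prems(4) and msum = Suc.prems(5) and sph = Suc.prems(6) and zr = Suc.prems(7)
  obtain a where aA: "a \<in> A" and ma: "0 < mult a"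
  proof -
    have "\<exists>a\<in>A. 0 < mult a"
    proof (rule ccontr)
      assume "\<not> (\<exists>a\<in>A. 0 < mult a)"
      then have "sum mult A = 0" by auto
      then show False using msum by simp
    qed
    then show ?thesis using that by blast
  qed
  have ar: "cmod a \<le> r" using aA Asub by auto
  have a1: "a \<in> ball 0 1" using ar r by auto
  have ga: "g a = 0" using zs aA ma by (metis funpow_0)
  define h where "h = (\<lambda>z. if z = a then deriv g a else (g z - g a) / (z - a))"
  have hhol: "h holomorphic_on ball 0 1"
    unfolding h_def by (rule pole_lemma[OF hol]) (use a1 in simp)
  have geq: "g w = (w - a) * h w" for w
    unfolding h_def using ga by auto
  define D where "D = (\<lambda>z. of_real (R^2) - cnj a * z)"
  define k where "k = (\<lambda>z. h z * (D z / of_real R))"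
  have khol: "k holomorphic_on ball 0 1"
    unfolding k_def D_def using r by (intro holomorphic_intros hhol) auto
  define mult' where "mult' = mult(a := mult a - 1)"
  have s1: "sum mult A = mult a + sum mult (A - {a})" using finA aA by (rule sum.remove)
  have s2: "sum mult' A = mult' a + sum mult' (A - {a})" using finA aA by (rule sum.remove)
  have s3: "sum mult' (A - {a}) = sum mult (A - {a})" unfolding mult'_def by (rule sum.cong) auto
  have msum': "m \<le> sum mult' A" using s1 s2 s3 msum ma unfolding mult'_def by simp
  have zs': "\<forall>b\<in>A. \<forall>j<mult' b. (deriv ^^ j) k b = 0"
  proof (intro ballI allI impI)
    fix b j assume bA: "b \<in> A" and j: "j < mult' b"
    have bS: "b \<in> ball 0 1" using bA Asub r by auto
    have Dhol: "(\<lambda>z. D z / of_real R) holomorphic_on ball 0 1"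
      unfolding D_def using r by (intro holomorphic_intros) auto
    show "(deriv ^^ j) k b = 0"
    proof (cases "b = a")
      case True
      have "\<forall>j<mult b - 1. (deriv ^^ j) h b = 0"
        by (rule zero_transfer(2)[OF hhol open_ball bS _ _ True]) (use geq zs bA in auto)
      then show ?thesis unfolding k_def
        by (rule higher_deriv_mult_zero[OF hhol Dhol open_ball bS]) (use j True mult'_def in auto)
    next
      case False
      have "\<forall>j<mult b. (deriv ^^ j) h b = 0"
        by (rule zero_transfer(1)[OF hhol open_ball bS _ _ False]) (use geq zs bA in auto)
      then show ?thesis unfolding k_def
        by (rule higher_deriv_mult_zero[OF hhol Dhol open_ball bS]) (use j False mult'_def in auto)
    qed
  qed
  have sph': "\<forall>z. cmod z = R \<longrightarrow> cmod (k z) \<le> M"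
  proof (intro allI impI)
    fix w assume w: "cmod w = R"
    have wa: "w \<noteq> a" using w ar r by auto
    have "cmod (D w) = R * cmod (w - a)" unfolding D_def by (rule blaschke_sphere) (use w r in auto)
    then have "cmod (k w) = cmod (h w) * cmod (w - a)"
      unfolding k_def using r by (simp add: norm_mult norm_divide)
    also have "\<dots> = cmod (g w)" using geq[of w] by (simp add: norm_mult)
    also have "\<dots> \<le> M" using sph w by blast
    finally show "cmod (k w) \<le> M" .
  qed
  have IH: "cmod (k z) \<le> bd r R ^ m * M"
    by (rule Suc.IH[OF khol finA Asub zs' msum' sph' zr])
  have Dz: "D z \<noteq> 0" unfolding D_def by (rule D_nonzero) (use r ar zr in auto)
  have "(of_real R * (z - a) / D z) * k z = (z - a) * h z"
    unfolding k_def using Dz r by (simp add: field_simps)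
  then have "g z = (R * (z - a) / D z) * k z" using geq[of z] by simp
  then have "cmod (g z) = R * cmod (z - a) / cmod (D z) * cmod (k z)"
    using r by (simp add: norm_mult norm_divide)
  also have "\<dots> \<le> bd r R * cmod (k z)"
  proof (rule mult_right_mono)
    have "R * cmod (z - a) \<le> bd r R * cmod (D z)" unfolding D_def
      by (rule blaschke_le) (use r ar zr in auto)
    then show "R * cmod (z - a) / cmod (D z) \<le> bd r R" using Dz by (simp add: divide_le_eq)
  qed simp
  also have "\<dots> \<le> bd r R * (bd r R ^ m * M)"
    using IH bd_props[OF r(1,2)] by (intro mult_left_mono) auto
  finally show ?case by simp
qed

lemma small:
  fixes r R M :: real
  assumes "0 < r" "r < R" "R < 1"
    and "g holomorphic_on ball 0 1" "finite A" "A \<subseteq> cball 0 r"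
    "\<forall>z\<in>A. \<forall>j<mu z. (deriv ^^ j) g z = 0" "m \<le> sum mu A"
    "\<forall>z. cmod z = R \<longrightarrow> cmod (g z) \<le> M" "cmod z \<le> r"
  shows "cmod (g z) \<le> bd r R ^ m * M"
  using small_induct[OF assms(1-3)] assms(4-) by blast

lemma poly_coeff_bound:
  fixes p :: "complex poly"
  assumes "0 < r" "\<And>w. cmod w = r \<Longrightarrow> cmod (poly p w) \<le> B"
  shows "cmod (coeff p k) \<le> B / r^k"
proof -
  have "cmod ((deriv ^^ k) (poly p) 0) \<le> fact k * B / r^k"
  proof (rule Cauchy_inequality)
    show "poly p holomorphic_on ball 0 r" by (intro holomorphic_intros)
    show "continuous_on (cball 0 r) (poly p)" by (intro continuous_intros)
    show "0 < r" by fact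
    show "cmod (poly p x) \<le> B" if "cmod (0 - x) = r" for x using that assms(2) by simp
  qed
  then have "cmod (fact k * coeff p k) \<le> fact k * B / r^k" by (simp only: higher_deriv_poly_0)
  then have "fact k * cmod (coeff p k) \<le> fact k * (B / r^k)"
    by (simp only: norm_mult norm_fact times_divide_eq_right)
  then show ?thesis by (rule mult_left_le_imp_le) simp
qed

lemma poly_bound:
  fixes p :: "complex poly"
  assumes "0 < r" "r \<le> R" "degree p \<le> n" "\<And>w. cmod w = r \<Longrightarrow> cmod (poly p w) \<le> B"
    and z: "cmod z \<le> R"
  shows "cmod (poly p z) \<le> real (Suc n) * (R / r)^n * B"
proof -
  have B0: "0 \<le> B" using assms(4)[of "of_real r"] assms(1) by (smt (verit) norm_ge_zero norm_of_real)
  have "poly p z = (\<Sum>i\<le>degree p. coeff p i * z ^ i)" by (rule poly_altdef)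
  also have "\<dots> = (\<Sum>i\<le>n. coeff p i * z ^ i)"
    by (rule sum.mono_neutral_left) (use assms(3) in \<open>auto simp: coeff_eq_0\<close>)
  finally have "cmod (poly p z) \<le> (\<Sum>i\<le>n. cmod (coeff p i * z ^ i))"
    by (simp add: norm_sum)
  also have "\<dots> \<le> (\<Sum>i\<le>n. (R / r)^n * B)"
  proof (rule sum_mono)
    fix i assume i: "i \<in> {..n}"
    have "cmod (coeff p i * z ^ i) = cmod (coeff p i) * cmod z ^ i" by (simp add: norm_mult norm_power)
    also have "\<dots> \<le> (B / r^i) * R ^ i"
      using poly_coeff_bound[OF assms(1) assms(4)] z B0 assms(1) by (intro mult_mono power_mono) auto
    also have "\<dots> = (R / r)^i * B" by (simp add: power_divide)
    also have "\<dots> \<le> (R / r)^n * B"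
    proof (rule mult_right_mono[OF _ B0])
      have "1 \<le> R / r" using assms(1,2) by simp
      then show "(R / r)^i \<le> (R / r)^n" using i by (intro power_increasing) auto
    qed
    finally show "cmod (coeff p i * z ^ i) \<le> (R / r)^n * B" .
  qed
  also have "\<dots> = real (Suc n) * (R / r)^n * B" by simp
  finally show ?thesis .
qed

lemma Q_deriv:
  fixes f :: "complex \<Rightarrow> complex"
  assumes hol: "f holomorphic_on ball 0 1"
  shows "(deriv ^^ Suc n) (\<lambda>z. poly [:-1, c:] z * f z) 0
        = c * of_nat (Suc n) * (deriv ^^ n) f 0 - (deriv ^^ Suc n) f 0"
proof -
  have ph: "poly [:-1, c:] holomorphic_on ball 0 1" by (intro holomorphic_intros)
  have "(deriv ^^ Suc n) (\<lambda>z. poly [:-1, c:] z * f z) 0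
     = (\<Sum>i = 0..Suc n. of_nat (Suc n choose i) * (deriv ^^ i) (poly [:-1, c:]) 0 * (deriv ^^ (Suc n - i)) f 0)"
    by (rule higher_deriv_mult[OF ph hol open_ball]) simp
  also have "\<dots> = (\<Sum>i \<in> {0, 1}. of_nat (Suc n choose i) * (deriv ^^ i) (poly [:-1, c:]) 0 * (deriv ^^ (Suc n - i)) f 0)"
  proof (rule sym, rule sum.mono_neutral_left)
    show "\<forall>i\<in>{0..Suc n} - {0, 1}. of_nat (Suc n choose i) * (deriv ^^ i) (poly [:-1, c:]) 0 * (deriv ^^ (Suc n - i)) f 0 = 0"
    proof
      fix i assume "i \<in> {0..Suc n} - {0, 1}"
      then have "2 \<le> i" by auto
      then have "coeff [:-1, c:] i = 0" by (simp add: coeff_eq_0)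
      then show "of_nat (Suc n choose i) * (deriv ^^ i) (poly [:-1, c:]) 0 * (deriv ^^ (Suc n - i)) f 0 = 0"
        by (simp only: higher_deriv_poly_0) simp
    qed
  qed auto
  also have "\<dots> = c * of_nat (Suc n) * (deriv ^^ n) f 0 - (deriv ^^ Suc n) f 0"
    by (simp only: higher_deriv_poly_0) (simp del: funpow.simps)
  finally show ?thesis .
qed

lemma step_bound:
  fixes f :: "complex \<Rightarrow> complex" and c :: complex and P :: "complex poly"
  assumes hol: "f holomorphic_on ball 0 1" and r: "0 < r" "r < 1"
    and Rdef: "R = (1 + r) / 2"
    and Bf: "\<forall>z\<in>cball 0 R. cmod (f z) \<le> Bf"
    and c: "cmod c \<le> a0"
    and deg: "degree P \<le> n"
    and zal: "zeros_at_least (\<lambda>z. poly (Qpoly (Some c)) z * f z - poly P z) (cball 0 r) N"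
    and th: "bd r R ^ nat N * (real (Suc n) * (R / r)^n) \<le> 1/2"
  shows "cmod (c * taylor_coeff f n - taylor_coeff f (Suc n))
           \<le> 4 * (bd r R ^ nat N * (real (Suc n) * (R / r)^n)) * ((a0 + 1) * Bf) / r^(Suc n)"
proof -
  have rR: "r < R" "R < 1" "0 < R" using r Rdef by auto
  define g where "g = (\<lambda>z. poly [:-1, c:] z * f z - poly P z)"
  have gQ: "(\<lambda>z. poly (Qpoly (Some c)) z * f z - poly P z) = g" unfolding g_def Qpoly_def by simp
  have Qfhol: "(\<lambda>z. poly [:-1, c:] z * f z) holomorphic_on ball 0 1" by (intro holomorphic_intros hol)
  have Phol: "poly P holomorphic_on ball 0 1" by (intro holomorphic_intros)
  have ghol: "g holomorphic_on ball 0 1" unfolding g_def by (intro holomorphic_intros hol)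
  have a0: "0 \<le> a0" using c norm_ge_zero order_trans by blast
  have Bf0: "0 \<le> Bf" using Bf rR by (metis centre_in_cball less_imp_le norm_ge_zero order_trans)
  define C where "C = (a0 + 1) * Bf"
  have C0: "0 \<le> C" unfolding C_def using a0 Bf0 by simp
  have QfC: "cmod (poly [:-1, c:] z * f z) \<le> C" if z: "cmod z \<le> R" for z
  proof -
    have "poly [:-1, c:] z = c * z - 1" by simp
    then have "cmod (poly [:-1, c:] z) \<le> cmod (c * z) + 1"
      by (metis norm_one norm_triangle_ineq4)
    also have "cmod (c * z) \<le> a0 * 1" unfolding norm_mult using c z rR a0
      by (intro mult_mono) auto
    finally have q: "cmod (poly [:-1, c:] z) \<le> a0 + 1" by simp
    have "cmod (f z) \<le> Bf" using Bf z by auto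
    then show ?thesis unfolding norm_mult C_def using q a0
      by (intro mult_mono) auto
  qed
  have gcont: "continuous_on (cball 0 r) g"
    using ghol r by (intro holomorphic_on_imp_continuous_on) (auto elim!: holomorphic_on_subset)
  obtain z0 where z0: "z0 \<in> cball 0 r" "\<forall>y\<in>cball 0 r. cmod (g y) \<le> cmod (g z0)"
  proof -
    have "\<exists>x\<in>cball 0 r. \<forall>y\<in>cball 0 r. cmod (g y) \<le> cmod (g x)"
      by (rule continuous_attains_sup) (use r gcont in \<open>auto intro: continuous_intros\<close>)
    then show ?thesis using that by blast
  qed
  define E where "E = cmod (g z0)"
  have E0: "0 \<le> E" unfolding E_def by simp
  have gE: "cmod (g y) \<le> E" if "cmod y \<le> r" for y using z0 that unfolding E_def by auto
  have PB: "cmod (poly P w) \<le> C + E" if w: "cmod w = r" for w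
  proof -
    have "poly P w = poly [:-1, c:] w * f w - g w" unfolding g_def by simp
    then have "cmod (poly P w) \<le> cmod (poly [:-1, c:] w * f w) + cmod (g w)"
      by (metis norm_triangle_ineq4)
    also have "\<dots> \<le> C + E" using QfC[of w] gE[of w] w rR by auto
    finally show ?thesis .
  qed
  define K where "K = real (Suc n) * (R / r)^n"
  have K1: "1 \<le> K"
  proof -
    have "1 \<le> (R / r)^n" using r rR by (intro one_le_power) simp
    moreover have "1 \<le> real (Suc n)" by simp
    ultimately show ?thesis unfolding K_def using one_le_mult_iff by (metis mult_mono' zero_le_one mult_1_left order_trans)
  qed
  define M where "M = C + K * (C + E)"
  have gR: "\<forall>z. cmod z = R \<longrightarrow> cmod (g z) \<le> M"
  proof (intro allI impI)
    fix z assume z: "cmod z = R"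
    have "cmod (g z) \<le> cmod (poly [:-1, c:] z * f z) + cmod (poly P z)"
      unfolding g_def by (rule norm_triangle_ineq4)
    also have "\<dots> \<le> C + K * (C + E)"
      using QfC[of z] poly_bound[OF r(1) _ deg PB, of R z] z rR unfolding K_def by auto
    finally show "cmod (g z) \<le> M" unfolding M_def .
  qed
  obtain A mu where A: "finite A" "A \<subseteq> cball 0 r" "\<forall>z\<in>A. \<forall>j<mu z. (deriv ^^ j) g z = 0"
    and Asum: "int (sum mu A) \<ge> N"
    using zal unfolding zeros_at_least_def gQ by blast
  have mle: "nat N \<le> sum mu A" using Asum by linarith
  define t where "t = bd r R ^ nat N"
  have t0: "0 \<le> t" unfolding t_def using bd_props(1)[OF r(1) rR(1)] by simp
  have "E \<le> t * M" unfolding E_def t_def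
    by (rule small[OF r(1) rR(1) rR(2) ghol A mle gR]) (use z0 in auto)
  also have "\<dots> = t * C + (t * K) * C + (t * K) * E" unfolding M_def by (simp add: algebra_simps)
  finally have E1: "E \<le> t * C + (t * K) * C + (t * K) * E" .
  have th': "t * K \<le> 1/2" using th unfolding t_def K_def .
  have "(t * K) * E \<le> (1/2) * E" using th' E0 by (rule mult_right_mono)
  moreover have "t * C \<le> (t * K) * C"
    using t0 K1 C0 by (intro mult_right_mono) (auto simp: mult_le_cancel_left1)
  ultimately have Eb: "E \<le> 4 * (t * K) * C" using E1 by linarith
  have Xb: "cmod ((deriv ^^ Suc n) g 0) \<le> fact (Suc n) * E / r ^ Suc n"
  proof (rule Cauchy_inequality)
    show "g holomorphic_on ball 0 r" using ghol r by (auto elim!: holomorphic_on_subset)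
    show "continuous_on (cball 0 r) g" by (rule gcont)
    show "0 < r" by (rule r)
    show "cmod (g x) \<le> E" if "cmod (0 - x) = r" for x using gE that by simp
  qed
  have Xe: "(deriv ^^ Suc n) g 0 = c * of_nat (Suc n) * (deriv ^^ n) f 0 - (deriv ^^ Suc n) f 0"
  proof -
    have "(deriv ^^ Suc n) g 0 = (deriv ^^ Suc n) (\<lambda>z. poly [:-1, c:] z * f z) 0 - (deriv ^^ Suc n) (poly P) 0"
      unfolding g_def by (rule higher_deriv_diff[OF Qfhol Phol open_ball]) simp
    also have "(deriv ^^ Suc n) (poly P) 0 = 0"
      using deg by (simp only: higher_deriv_poly_0) (simp add: coeff_eq_0)
    finally show ?thesis using Q_deriv[OF hol, of n c] by simp
  qed
  have Te: "c * taylor_coeff f n - taylor_coeff f (Suc n)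
      = (c * of_nat (Suc n) * (deriv ^^ n) f 0 - (deriv ^^ Suc n) f 0) / fact (Suc n)"
  proof -
    define A where "A = (deriv ^^ n) f 0"
    define B where "B = (deriv ^^ Suc n) f 0"
    have fs: "(fact (Suc n) :: complex) = of_nat (Suc n) * fact n" by (rule fact_Suc)
    have t1: "taylor_coeff f n = A / fact n" unfolding taylor_coeff_def A_def by (simp only: of_nat_fact)
    have t2: "taylor_coeff f (Suc n) = B / fact (Suc n)" unfolding taylor_coeff_def B_def by (simp only: of_nat_fact)
    have nz: "(of_nat (Suc n) :: complex) \<noteq> 0" by (simp only: of_nat_eq_0_iff)
    have "(c * of_nat (Suc n) * A - B) / fact (Suc n) = c * of_nat (Suc n) * A / fact (Suc n) - B / fact (Suc n)"
      by (rule diff_divide_distrib)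
    also have "c * of_nat (Suc n) * A / fact (Suc n) = c * A / fact n"
      unfolding fs using nz by (simp add: field_simps del: of_nat_Suc)
    finally show ?thesis unfolding t1 t2 A_def B_def by simp
  qed
  have "cmod (c * taylor_coeff f n - taylor_coeff f (Suc n)) = cmod ((deriv ^^ Suc n) g 0) / fact (Suc n)"
    unfolding Te Xe[symmetric] by (simp only: norm_divide norm_fact)
  also have "\<dots> \<le> (fact (Suc n) * E / r ^ Suc n) / fact (Suc n)"
    using Xb by (rule divide_right_mono) simp
  also have "\<dots> = E / r ^ Suc n" by simp
  finally have "cmod (c * taylor_coeff f n - taylor_coeff f (Suc n)) \<le> E / r ^ Suc n" .
  also have "\<dots> \<le> 4 * (t * K) * C / r ^ Suc n"
    using Eb r by (intro divide_right_mono) auto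
  finally show ?thesis unfolding t_def K_def C_def .
qed

lemma rec_bound:
  fixes x :: "nat \<Rightarrow> complex"
  assumes a: "0 < a" "0 \<le> a0" "a0 \<le> a"
    and rec: "\<And>n. n \<ge> n0 \<Longrightarrow> cmod (x (Suc n)) \<le> a0 * cmod (x n) + (a - a0) * a^n"
  shows "\<exists>D. \<forall>n\<ge>n0. cmod (x n) \<le> D * a^n"
proof -
  define D where "D = max 1 (cmod (x n0) / a^n0)"
  have D1: "1 \<le> D" unfolding D_def by simp
  have "cmod (x (n0 + k)) \<le> D * a^(n0 + k)" for k
  proof (induction k)
    case 0
    have "cmod (x n0) / a^n0 \<le> D" unfolding D_def by simp
    then show ?case using a by (simp add: divide_le_eq)
  next
    case (Suc k)
    have "cmod (x (Suc (n0 + k))) \<le> a0 * cmod (x (n0 + k)) + (a - a0) * a^(n0 + k)"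
      by (rule rec) simp
    also have "\<dots> \<le> a0 * (D * a^(n0 + k)) + (a - a0) * (D * a^(n0 + k))"
    proof (rule add_mono)
      show "a0 * cmod (x (n0 + k)) \<le> a0 * (D * a ^ (n0 + k))" using Suc a by (intro mult_left_mono) auto
      have "a^(n0+k) \<le> D * a^(n0+k)" using D1 a by (simp add: mult_le_cancel_right1)
      then show "(a - a0) * a ^ (n0 + k) \<le> (a - a0) * (D * a ^ (n0 + k))" using a by (intro mult_left_mono) auto
    qed
    also have "\<dots> = D * a^(n0 + Suc k)" by (simp add: algebra_simps)
    finally show ?case by simp
  qed
  then have "\<forall>n\<ge>n0. cmod (x n) \<le> D * a^n"
    by (metis le_add_diff_inverse)
  then show ?thesis by blast
qed

lemma conv_bound:
  fixes x :: "nat \<Rightarrow> complex"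
  assumes a: "0 < a" and b: "\<forall>n\<ge>n0. cmod (x n) \<le> D * a^n"
  shows "conv_radius x \<ge> ereal (1 / a)"
proof (rule conv_radius_geI_ex')
  fix s :: real assume s: "0 < s" "ereal s < ereal (1 / a)"
  then have as: "a * s < 1" using a by (simp add: field_simps)
  show "summable (\<lambda>n. x n * of_real s ^ n)"
  proof (rule summable_comparison_test_ev)
    show "\<forall>\<^sub>F n in sequentially. cmod (x n * of_real s ^ n) \<le> D * (a * s)^n"
      unfolding eventually_sequentially
    proof (intro exI allI impI)
      fix n assume "n0 \<le> n"
      then have "cmod (x n) * s^n \<le> D * a^n * s^n" using b s by (intro mult_right_mono) auto
      then show "cmod (x n * of_real s ^ n) \<le> D * (a * s)^n"
        using s by (simp add: norm_mult norm_power power_mult_distrib mult.assoc)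
    qed
    show "summable (\<lambda>n. D * (a * s)^n)"
      using as a s by (intro summable_mult summable_geometric) simp
  qed
qed

lemma absalpha_nonneg: "0 \<le> absalpha x"
  by (cases x) (simp_all add: absalpha_def)

lemma absalpha_less: "absalpha x < ereal a0 \<Longrightarrow> \<exists>c. x = Some c \<and> cmod c \<le> a0"
  by (cases x) (simp_all add: absalpha_def)

theorem lemma3p3:
  fixes f :: "complex \<Rightarrow> complex" and r :: real
    and N :: "nat \<Rightarrow> int" and P :: "nat \<Rightarrow> complex poly" and \<alpha> :: "nat \<Rightarrow> complex option"
  assumes "f holomorphic_on ball 0 1"
    and "0 < r" and "r < 1"
    and "mono N"
    and "filterlim (\<lambda>n. real_of_int (N n) / real n) at_top sequentially"
    and "\<And>n. degree (P n) \<le> n"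
    and "\<And>n. zeros_at_least (\<lambda>z. poly (Qpoly (\<alpha> n)) z * f z - poly (P n) z) (cball 0 r) (N n)"
  shows "limsup (\<lambda>n. absalpha (\<alpha> n)) \<ge> inverse (conv_radius (taylor_coeff f))"
proof (rule ccontr)
  note hol = assms(1) and r = assms(2,3) and Nlim = assms(5) and deg = assms(6) and zal = assms(7)
  define \<rho> where "\<rho> = conv_radius (taylor_coeff f)"
  define L where "L = limsup (\<lambda>n. absalpha (\<alpha> n))"
  assume "\<not> inverse (conv_radius (taylor_coeff f)) \<le> limsup (\<lambda>n. absalpha (\<alpha> n))"
  then have Lr: "L < inverse \<rho>" unfolding L_def \<rho>_def by simp
  have L0: "0 \<le> L" unfolding L_def
    by (rule le_Limsup[OF sequentially_bot]) (simp add: absalpha_nonneg)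
  obtain a0 where a0: "L < ereal a0" "ereal a0 < inverse \<rho>" using ereal_dense2[OF Lr] by blast
  obtain a where a: "ereal a0 < ereal a" "ereal a < inverse \<rho>" using ereal_dense2[OF a0(2)] by blast
  have "0 < ereal a0" using L0 a0(1) by (rule le_less_trans)
  then have a0pos: "0 < a0" by simp
  have aa0: "a0 < a" using a(1) by simp
  have apos: "0 < a" using a0pos aa0 by simp
  define R where "R = (1 + r) / 2"
  have rR: "r < R" "R < 1" "0 < R" using r unfolding R_def by auto
  define \<delta> where "\<delta> = bd r R"
  have \<delta>: "0 \<le> \<delta>" "\<delta> < 1" unfolding \<delta>_def using bd_props[OF r(1) rR(1)] by auto
  obtain Bf where Bf: "\<forall>z\<in>cball 0 R. cmod (f z) \<le> Bf"
  proof -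
    have "compact (f ` cball 0 R)"
      using hol rR by (intro compact_continuous_image holomorphic_on_imp_continuous_on)
        (auto elim!: holomorphic_on_subset)
    then have "bounded (f ` cball 0 R)" by (rule compact_imp_bounded)
    then obtain B where "\<forall>y\<in>f ` cball 0 R. norm y \<le> B" by (auto simp: bounded_iff)
    then show ?thesis using that by auto
  qed
  have Bf0: "0 \<le> Bf" using Bf rR by (metis centre_in_cball less_imp_le norm_ge_zero order_trans)
  define C where "C = (a0 + 1) * Bf"
  have C0: "0 \<le> C" unfolding C_def using a0pos Bf0 by simp
  define Kc where "Kc = 2 * R / r^2"
  have Kc: "0 < Kc" unfolding Kc_def using rR r by simp
  define \<beta> where "\<beta> = min a 1 / 2"
  have \<beta>: "0 < \<beta>" "\<beta> \<le> a / 2" "\<beta> \<le> 1 / 2" unfolding \<beta>_def using apos by auto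
  obtain Lq :: nat where Lq: "\<delta>^Lq * Kc \<le> \<beta>"
  proof -
    have "(\<lambda>k. \<delta>^k) \<longlonglongrightarrow> 0" by (rule LIMSEQ_power_zero) (use \<delta> in simp)
    moreover have "0 < \<beta> / Kc" using \<beta> Kc by simp
    ultimately have "eventually (\<lambda>k. \<delta>^k < \<beta> / Kc) sequentially" by (rule order_tendstoD(2))
    then obtain k0 where "\<forall>k\<ge>k0. \<delta>^k < \<beta> / Kc" unfolding eventually_sequentially by blast
    then obtain k where "\<delta>^k < \<beta> / Kc" by blast
    then have "\<delta>^k * Kc \<le> \<beta>" using Kc by (simp add: pos_less_divide_eq less_imp_le)
    then show ?thesis using that by blast
  qed
  define q where "q = \<delta>^Lq * Kc"
  have q0: "0 \<le> q" unfolding q_def using \<delta> Kc by simp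
  have ev1: "eventually (\<lambda>n. \<exists>c. \<alpha> n = Some c \<and> cmod c \<le> a0) sequentially"
  proof -
    have "eventually (\<lambda>n. absalpha (\<alpha> n) < ereal a0) sequentially"
      using Limsup_lessD[OF a0(1)[unfolded L_def]] .
    then show ?thesis
      by (rule eventually_mono) (rule absalpha_less)
  qed
  have ev2: "eventually (\<lambda>n. real Lq \<le> real_of_int (N n) / real n) sequentially"
    using Nlim unfolding filterlim_at_top by blast
  have ev3: "eventually (\<lambda>n. 4 * C / r * (1/2)^n < a - a0) sequentially"
  proof -
    have "(\<lambda>n. 4 * C / r * (1/2::real)^n) \<longlonglongrightarrow> 4 * C / r * 0"
      by (intro tendsto_mult tendsto_const LIMSEQ_power_zero) simp
    then show ?thesis using aa0 by (intro order_tendstoD(2)) auto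
  qed
  have ev: "eventually (\<lambda>n. 1 \<le> n \<and> (\<exists>c. \<alpha> n = Some c \<and> cmod c \<le> a0) \<and>
      real Lq \<le> real_of_int (N n) / real n \<and> 4 * C / r * (1/2)^n < a - a0) sequentially"
    using ev1 ev2 ev3 eventually_ge_at_top[of 1] by eventually_elim auto
  then obtain n0 where n0: "\<And>n. n \<ge> n0 \<Longrightarrow> 1 \<le> n \<and> (\<exists>c. \<alpha> n = Some c \<and> cmod c \<le> a0) \<and>
      real Lq \<le> real_of_int (N n) / real n \<and> 4 * C / r * (1/2)^n < a - a0"
    unfolding eventually_sequentially by blast
  have recb: "cmod (taylor_coeff f (Suc n)) \<le> a0 * cmod (taylor_coeff f n) + (a - a0) * a^n"
    if n: "n \<ge> n0" for n
  proof -
    from n0[OF n] obtain c where n1: "1 \<le> n" and c: "\<alpha> n = Some c" "cmod c \<le> a0"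
      and nN: "real Lq \<le> real_of_int (N n) / real n" and sm: "4 * C / r * (1/2)^n < a - a0"
      by blast
    define m where "m = nat (N n)"
    have mL: "Lq * n \<le> m"
    proof -
      have "real Lq * real n \<le> real_of_int (N n)" using nN n1 by (simp add: le_divide_eq)
      then have "real_of_int (int (Lq * n)) \<le> real_of_int (N n)" by simp
      then have "int (Lq * n) \<le> N n" by (simp only: of_int_le_iff)
      from nat_mono[OF this] show ?thesis unfolding m_def by (simp only: nat_int)
    qed
    define \<theta> where "\<theta> = \<delta>^m * (real (Suc n) * (R / r)^n)"
    have \<theta>0: "0 \<le> \<theta>" unfolding \<theta>_def using \<delta> r rR by simp
    have A1: "\<delta>^m \<le> (\<delta>^Lq)^n"
      unfolding power_mult[symmetric] using \<delta> mL by (intro power_decreasing) auto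
    have A2: "real (Suc n) \<le> 2^n"
    proof -
      have "Suc n \<le> 2^n" by (induction n) auto
      then show ?thesis by (metis of_nat_le_iff of_nat_numeral of_nat_power)
    qed
    have A3: "(R / r)^n / r^n = (R / r^2)^n" by (simp add: power_divide power2_eq_square power_mult_distrib)
    have "\<theta> / r^n = \<delta>^m * real (Suc n) * (R / r^2)^n" unfolding \<theta>_def A3[symmetric] by simp
    also have "\<dots> \<le> (\<delta>^Lq)^n * 2^n * (R / r^2)^n"
      using A1 A2 \<delta> rR r by (intro mult_mono) auto
    also have "\<dots> = q^n"
    proof -
      have "q = \<delta>^Lq * 2 * (R / r^2)" unfolding q_def Kc_def by simp
      then show ?thesis by (simp only: power_mult_distrib)
    qed
    finally have T: "\<theta> / r^n \<le> q^n" .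
    have qb: "q^n \<le> (1/2)^n" using Lq \<beta> q0 unfolding q_def[symmetric] by (intro power_mono) auto
    have "\<theta> \<le> \<theta> / r^n"
    proof -
      have "r^n \<le> 1" using r by (intro power_le_one) auto
      from mult_left_le[OF this \<theta>0] have tr: "\<theta> * r^n \<le> \<theta>" .
      have "0 < r^n" using r by simp
      then show ?thesis using tr by (simp only: pos_le_divide_eq)
    qed
    also have "\<dots> \<le> (1/2)^n" using T qb by simp
    also have "\<dots> \<le> (1/2)^1" using n1 by (intro power_decreasing) auto
    also have "\<dots> = 1/2" by simp
    finally have th: "\<theta> \<le> 1/2" .
    have zal': "zeros_at_least (\<lambda>z. poly (Qpoly (Some c)) z * f z - poly (P n) z) (cball 0 r) (N n)"
      using zal[of n] c by simp
    have sb: "cmod (c * taylor_coeff f n - taylor_coeff f (Suc n)) \<le> 4 * \<theta> * C / r^(Suc n)"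
      unfolding \<theta>_def C_def m_def \<delta>_def
      by (rule step_bound[OF hol r R_def Bf c(2) deg zal']) (use th in \<open>unfold \<theta>_def m_def \<delta>_def\<close>)
    also have "\<dots> = 4 * C / r * (\<theta> / r^n)" by (simp add: field_simps)
    also have "\<dots> \<le> 4 * C / r * q^n" using T C0 r by (intro mult_left_mono) auto
    also have "\<dots> \<le> 4 * C / r * (a / 2)^n"
      using Lq \<beta> q0 C0 r unfolding q_def[symmetric] by (intro mult_left_mono power_mono) auto
    also have "\<dots> = (4 * C / r * (1/2)^n) * a^n" by (simp add: power_divide)
    also have "\<dots> \<le> (a - a0) * a^n" using sm apos by (intro mult_right_mono) auto
    finally have sb2: "cmod (c * taylor_coeff f n - taylor_coeff f (Suc n)) \<le> (a - a0) * a^n" .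
    have "cmod (taylor_coeff f (Suc n)) \<le> cmod (c * taylor_coeff f n) + cmod (c * taylor_coeff f n - taylor_coeff f (Suc n))"
    proof -
      have "taylor_coeff f (Suc n) = c * taylor_coeff f n - (c * taylor_coeff f n - taylor_coeff f (Suc n))" by simp
      then show ?thesis by (metis norm_triangle_ineq4)
    qed
    also have "cmod (c * taylor_coeff f n) \<le> a0 * cmod (taylor_coeff f n)"
      unfolding norm_mult using c(2) by (intro mult_right_mono) auto
    finally show ?thesis using sb2 by linarith
  qed
  obtain D where D: "\<forall>n\<ge>n0. cmod (taylor_coeff f n) \<le> D * a^n"
    using rec_bound[OF apos less_imp_le[OF a0pos] less_imp_le[OF aa0] recb] by blast
  have "ereal (1 / a) \<le> \<rho>" unfolding \<rho>_def by (rule conv_bound[OF apos D])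
  then have "inverse \<rho> \<le> inverse (ereal (1 / a))"
    using apos by (intro ereal_inverse_antimono) auto
  also have "inverse (ereal (1 / a)) = ereal a" using apos by simp
  finally show False using a(2) by simp
qed

end
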